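(* Let $X$ be as in the context. If $\liminf_{x\to\infty}H_1(x)>1$, then $X$ is transient.
   Context: Let $\mathbb S\subseteq\mathbb Z_{\ge0}$ be an infinite set and let $X$ be an irreducible continuous-time Markov chain on $\mathbb S$ whose generator acts on functions $f:\mathbb S\to\mathbb R$ by $\mathcal A f(x)=\sum_{\eta\in\mathbb Z}\lambda_\eta(x)\big(f(x+\eta)-f(x)\big)$, where $\lambda_\eta(x)$ is the rate of the jump $x\to x+\eta$ (and $\lambda_\eta(x)=0$ whenever $x+\eta\notin\mathbb S$). Standing assumption: (a) there is a finite set $\Gamma\subset\mathbb Z$ such that $\lambda_\eta\equiv0$ for $\eta\notin\Gamma$; (b) $0\le\lambda_\eta(x)<\infty$ for all $x,\eta$. Define $m(x)=\sum_{\eta}\eta\,\lambda_\eta(x)$, $v(x)=\frac12\sum_\eta\eta^2\lambda_\eta(x)$ (positive on $\mathbb S$), and for $x>1$, $H_1(x)=\dfrac{(\log x)(m(x)x-v(x))}{v(x)}$. *)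

theory Defs
  imports "HOL-Analysis.Analysis"
begin

text \<open>A chain on a state space S (a set of naturals) is given by its jump rates:
  lam \<eta> x is the rate of the jump x \<rightarrow> x + \<eta>.\<close>

definition target :: "nat \<Rightarrow> int \<Rightarrow> nat" where
  "target x \<eta> = nat (int x + \<eta>)"

definition jumps :: "(int \<Rightarrow> nat \<Rightarrow> real) \<Rightarrow> nat \<Rightarrow> int set" where
  "jumps lam x = {\<eta>. \<eta> \<noteq> 0 \<and> lam \<eta> x \<noteq> 0}"

definition qtot :: "(int \<Rightarrow> nat \<Rightarrow> real) \<Rightarrow> nat \<Rightarrow> real" where
  "qtot lam x = (\<Sum>\<eta>\<in>jumps lam x. lam \<eta> x)"

definition jprob :: "(int \<Rightarrow> nat \<Rightarrow> real) \<Rightarrow> nat \<Rightarrow> int \<Rightarrow> real" where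
  "jprob lam x \<eta> = lam \<eta> x / qtot lam x"

text \<open>first_hit lam x n y = probability that the jump chain started at y
  visits x for the first time at some time \<ge> 1 exactly at step n.\<close>
primrec first_hit :: "(int \<Rightarrow> nat \<Rightarrow> real) \<Rightarrow> nat \<Rightarrow> nat \<Rightarrow> nat \<Rightarrow> real" where
  "first_hit lam x 0 y = 0"
| "first_hit lam x (Suc n) y =
     (\<Sum>\<eta>\<in>jumps lam y. jprob lam y \<eta> *
        (if target y \<eta> = x then (if n = 0 then 1 else 0) else first_hit lam x n (target y \<eta>)))"

text \<open>Transience: every state is transient, i.e. the probability of ever
  returning to it (the supremum of the partial sums of first-return
  probabilities) is strictly below 1. (For an irreducible chain transience of
  one state is equivalent to transience of all.) Transience of a
  continuous-time chain is by definition transience of its jump chain.\<close>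
definition transient_chain :: "nat set \<Rightarrow> (int \<Rightarrow> nat \<Rightarrow> real) \<Rightarrow> bool" where
  "transient_chain S lam \<longleftrightarrow>
     (\<forall>x\<in>S. \<exists>\<epsilon>>0. \<forall>N. (\<Sum>n<N. first_hit lam x n x) \<le> 1 - \<epsilon>)"

definition jump_rel :: "nat set \<Rightarrow> (int \<Rightarrow> nat \<Rightarrow> real) \<Rightarrow> nat \<Rightarrow> nat \<Rightarrow> bool" where
  "jump_rel S lam x y \<longleftrightarrow> x \<in> S \<and> y \<in> S \<and> (\<exists>\<eta>. \<eta> \<noteq> 0 \<and> lam \<eta> x > 0 \<and> int y = int x + \<eta>)"

definition irreducible_chain :: "nat set \<Rightarrow> (int \<Rightarrow> nat \<Rightarrow> real) \<Rightarrow> bool" where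
  "irreducible_chain S lam \<longleftrightarrow> (\<forall>x\<in>S. \<forall>y\<in>S. (jump_rel S lam)\<^sup>*\<^sup>* x y)"

definition drift :: "int set \<Rightarrow> (int \<Rightarrow> nat \<Rightarrow> real) \<Rightarrow> nat \<Rightarrow> real" where
  "drift \<Gamma> lam x = (\<Sum>\<eta>\<in>\<Gamma>. real_of_int \<eta> * lam \<eta> x)"

definition vfun :: "int set \<Rightarrow> (int \<Rightarrow> nat \<Rightarrow> real) \<Rightarrow> nat \<Rightarrow> real" where
  "vfun \<Gamma> lam x = (1/2) * (\<Sum>\<eta>\<in>\<Gamma>. (real_of_int \<eta>)^2 * lam \<eta> x)"

definition H1 :: "int set \<Rightarrow> (int \<Rightarrow> nat \<Rightarrow> real) \<Rightarrow> nat \<Rightarrow> real" where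
  "H1 \<Gamma> lam x = ln (real x) * (drift \<Gamma> lam x * real x - vfun \<Gamma> lam x) / vfun \<Gamma> lam x"

end

theory Submission
  imports Defs "HOL-Real_Asymp.Real_Asymp"
begin

definition ff :: "real \<Rightarrow> real" where "ff t = 1 / ln (ln t)"

lemma remainder_small:
  fixes \<eta> :: real
  shows "(\<lambda>y. 1 / ln (ln (y+\<eta>)) - 1 / ln (ln y) + \<eta> / (y * ln y * (ln (ln y)*ln (ln y)))
     - \<eta>*\<eta>/2 * (1 / (y * ln y * (ln (ln y)*ln (ln y)))) * (1/y + 1/(y * ln y) + 2 /(y * ln y * ln (ln y))))
     \<in> o(\<lambda>y. 1/ (y*y * (ln y * ln y) * (ln (ln y)*ln (ln y))))"
  by real_asymp

lemma ln_ln_pos: "(16::real) \<le> a \<Longrightarrow> 0 < ln (ln a)"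
proof -
  assume a: "16 \<le> a"
  have "exp 1 \<le> (3::real)" using exp_le by simp
  hence "exp 1 < a" using a by simp
  hence "ln (exp 1) < ln a" using a by (subst ln_less_cancel_iff) auto
  thus ?thesis by simp
qed

lemma ff_pos: "(16::real) \<le> a \<Longrightarrow> 0 < ff a"
  unfolding ff_def using ln_ln_pos by simp

lemma ff_strict: assumes "(16::real) \<le> a" "a < b" shows "ff b < ff a"
proof -
  have "0 < ln (ln a)" using ln_ln_pos assms by simp
  have "ln a < ln b" using assms by simp
  moreover have "0 < ln a" using assms by simp
  ultimately have "ln (ln a) < ln (ln b)" by simp
  thus ?thesis unfolding ff_def using \<open>0 < ln (ln a)\<close>
    by (simp add: frac_less2)
qed

lemma ff_mono: assumes "(16::real) \<le> a" "a \<le> b" shows "ff b \<le> ff a"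
  using ff_strict[OF assms(1), of b] assms(2) by (cases "a = b") auto

lemma alg_identity:
  fixes y L M m v :: real assumes "y \<noteq> 0" "L \<noteq> 0" "M \<noteq> 0"
  shows "- m * (1 / (y * L * (M * M))) + v * ((1 / (y * L * (M * M))) * (1 / y + 1 / (y * L) + 2 / (y * L * M)))
    = (1 / (y * y * (L * L) * (M * M))) * (- (L * (m * y - v)) + v * (1 + 2 / M))"
  using assms by (simp add: field_simps)

lemma key_analytic:
  fixes \<Gamma> :: "int set" and lam :: "int \<Rightarrow> nat \<Rightarrow> real" and c :: real
  assumes fin: "finite \<Gamma>" and nonneg: "\<And>\<eta> x. 0 \<le> lam \<eta> x" and c: "c > 1"
  shows "\<exists>Y. \<forall>y::nat. real y \<ge> Y \<longrightarrow> H1 \<Gamma> lam y > c \<longrightarrow>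
           (\<Sum>\<eta>\<in>\<Gamma>. lam \<eta> y * (ff (real y + of_int \<eta>) - ff (real y))) \<le> 0"
proof -
  define phi where "phi = (\<lambda>y::real. 1 / (y * ln y * (ln (ln y)*ln (ln y))))"
  define B where "B = (\<lambda>y::real. phi y * (1/y + 1/(y * ln y) + 2 /(y * ln y * ln (ln y))))"
  define gg where "gg = (\<lambda>y::real. 1/ (y*y * (ln y * ln y) * (ln (ln y)*ln (ln y))))"
  define R where "R = (\<lambda>(\<eta>::real) y. ff (y+\<eta>) - ff y + \<eta> * phi y - \<eta>*\<eta>/2 * B y)"
  define \<delta> where "\<delta> = (c - 1) / 8"
  have \<delta>: "\<delta> > 0" using c by (simp add: \<delta>_def)
  have o: "R \<eta> \<in> o(gg)" for \<eta>
  proof -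
    have "(\<lambda>y. R \<eta> y) = (\<lambda>y. 1 / ln (ln (y+\<eta>)) - 1 / ln (ln y) + \<eta> / (y * ln y * (ln (ln y)*ln (ln y)))
     - \<eta>*\<eta>/2 * (1 / (y * ln y * (ln (ln y)*ln (ln y)))) * (1/y + 1/(y * ln y) + 2 /(y * ln y * ln (ln y))))"
      by (simp add: R_def ff_def phi_def B_def)
    thus ?thesis using remainder_small[of \<eta>] unfolding gg_def by simp
  qed
  have ev1: "eventually (\<lambda>y. \<forall>\<eta>\<in>\<Gamma>. norm (R (of_int \<eta>) y) \<le> \<delta> * norm (gg y)) at_top"
    using fin by (intro eventually_ball_finite ballI landau_o.smallD[OF o \<delta>]) 
  have lim: "filterlim (\<lambda>y::real. ln (ln y)) at_top at_top" by real_asymp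
  have ev2: "eventually (\<lambda>y. 4 / (c - 1) \<le> ln (ln y)) at_top"
    using lim by (simp add: filterlim_at_top)
  have ev3: "eventually (\<lambda>y::real. 16 \<le> y) at_top" by (rule eventually_ge_at_top)
  obtain Y where Y: "\<And>y. y \<ge> Y \<Longrightarrow> (\<forall>\<eta>\<in>\<Gamma>. norm (R (of_int \<eta>) y) \<le> \<delta> * norm (gg y))
      \<and> 4 / (c - 1) \<le> ln (ln y) \<and> 16 \<le> y"
    using eventually_conj[OF ev1 eventually_conj[OF ev2 ev3]] by (auto simp: eventually_at_top_linorder)
  show ?thesis
  proof (intro exI allI impI)
    fix y :: nat
    assume yY: "real y \<ge> Y" and H: "H1 \<Gamma> lam y > c"
    let ?y = "real y"
    let ?L = "ln ?y" and ?M = "ln (ln ?y)"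
    let ?m = "drift \<Gamma> lam y" and ?v = "vfun \<Gamma> lam y"
    have Rb: "\<And>\<eta>. \<eta>\<in>\<Gamma> \<Longrightarrow> norm (R (of_int \<eta>) ?y) \<le> \<delta> * norm (gg ?y)"
      and M4: "4 / (c - 1) \<le> ?M" and y16: "16 \<le> ?y" using Y[OF yY] by auto
    have Mpos: "0 < ?M" using ln_ln_pos[OF y16] .
    have Lpos: "1 < ?L"
    proof -
      have "0 < ln ?L" using Mpos by simp
      thus ?thesis using y16 by (simp add: ln_gt_zero_iff)
    qed
    have ypos: "0 < ?y" using y16 by simp
    have ggpos: "0 < gg ?y" unfolding gg_def using Lpos Mpos ypos y16
      by (intro divide_pos_pos mult_pos_pos) auto
    have vnn: "0 \<le> ?v" unfolding vfun_def by (auto intro!: sum_nonneg mult_nonneg_nonneg nonneg)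
    have vpos: "0 < ?v"
    proof (rule ccontr)
      assume "\<not> 0 < ?v" hence "?v = 0" using vnn by simp
      hence "H1 \<Gamma> lam y = 0" by (simp add: H1_def)
      thus False using H c by simp
    qed
    have Hc: "?L * (?m * ?y - ?v) > c * ?v"
      using H vpos by (simp add: H1_def pos_less_divide_eq mult.commute)
    have main: "- ?m * phi ?y + ?v * B ?y = gg ?y * (- (?L * (?m * ?y - ?v)) + ?v * (1 + 2 / ?M))"
      unfolding phi_def B_def gg_def using Lpos Mpos ypos
      by (intro alg_identity) auto
    have "2 / ?M \<le> (c - 1) / 2"
      using M4 Mpos c by (simp add: field_simps)
    hence "- (?L * (?m * ?y - ?v)) + ?v * (1 + 2 / ?M) \<le> - c * ?v + ?v * (1 + (c - 1) / 2)"
      using Hc vpos by (intro add_mono mult_left_mono) auto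
    moreover have "- c * ?v + ?v * (1 + (c - 1) / 2) = - ?v * (c - 1) / 2" by (simp add: field_simps)
    ultimately have main2: "- ?m * phi ?y + ?v * B ?y \<le> gg ?y * (- ?v * (c - 1) / 2)"
      unfolding main using ggpos by (metis less_imp_le mult_left_mono)
    have termwise: "lam \<eta> y * R (of_int \<eta>) ?y \<le> lam \<eta> y * (of_int \<eta>)^2 * (\<delta> * gg ?y)"
      if "\<eta> \<in> \<Gamma>" for \<eta>
    proof (cases "\<eta> = 0")
      case True thus ?thesis by (simp add: R_def)
    next
      case False
      have "1 \<le> (real_of_int \<eta>)^2"
      proof -
        have "1 \<le> \<bar>\<eta>\<bar>" using False by simp
        hence "1 \<le> \<bar>real_of_int \<eta>\<bar>" by linarith
        hence "1 * 1 \<le> \<bar>real_of_int \<eta>\<bar> * \<bar>real_of_int \<eta>\<bar>" by (intro mult_mono) auto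
        thus ?thesis by (simp add: power2_eq_square)
      qed
      have "R (of_int \<eta>) ?y \<le> \<delta> * gg ?y" using Rb[OF that] ggpos by auto
      also have "\<dots> \<le> (of_int \<eta>)^2 * (\<delta> * gg ?y)"
        using \<open>1 \<le> _\<close> \<delta> ggpos using mult_right_mono[of 1 "(of_int \<eta>)^2" "\<delta> * gg ?y"] by simp
      finally show ?thesis using nonneg[of \<eta> y] by (simp add: mult_left_mono mult.assoc)
    qed
    have "(\<Sum>\<eta>\<in>\<Gamma>. lam \<eta> y * (ff (?y + of_int \<eta>) - ff ?y))
        = (\<Sum>\<eta>\<in>\<Gamma>. - (of_int \<eta> * lam \<eta> y) * phi ?y + ((of_int \<eta>)^2 * lam \<eta> y) / 2 * B ?y
             + lam \<eta> y * R (of_int \<eta>) ?y)"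
      by (intro sum.cong refl) (simp add: R_def algebra_simps power2_eq_square)
    also have "\<dots> = - ?m * phi ?y + ?v * B ?y + (\<Sum>\<eta>\<in>\<Gamma>. lam \<eta> y * R (of_int \<eta>) ?y)"
      by (simp add: sum.distrib drift_def vfun_def sum_distrib_right sum_divide_distrib sum_negf sum_subtractf)
    also have "\<dots> \<le> gg ?y * (- ?v * (c - 1) / 2) + (\<Sum>\<eta>\<in>\<Gamma>. lam \<eta> y * (of_int \<eta>)^2 * (\<delta> * gg ?y))"
      using main2 termwise by (intro add_mono sum_mono) auto
    also have "(\<Sum>\<eta>\<in>\<Gamma>. lam \<eta> y * (of_int \<eta>)^2 * (\<delta> * gg ?y)) = 2 * ?v * \<delta> * gg ?y"
      unfolding vfun_def by (simp add: sum_distrib_left sum_distrib_right algebra_simps)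
    also have "gg ?y * (- ?v * (c - 1) / 2) + 2 * ?v * \<delta> * gg ?y = - gg ?y * ?v * (c - 1) / 4"
      by (simp add: \<delta>_def field_simps)
    also have "\<dots> \<le> 0" using ggpos vpos c by (simp add: mult_pos_pos)
    finally show "(\<Sum>\<eta>\<in>\<Gamma>. lam \<eta> y * (ff (real y + of_int \<eta>) - ff (real y))) \<le> 0" .
  qed
qed

lemma hit_step:
  assumes pnn: "\<And>\<eta>. 0 \<le> jprob lam y \<eta>"
  shows "(\<Sum>n<Suc N. first_hit lam x n y) \<le> (\<Sum>\<eta>\<in>jumps lam y. jprob lam y \<eta> *
     (if target y \<eta> = x then 1 else (\<Sum>n<N. first_hit lam x n (target y \<eta>))))"
proof -
  have "(\<Sum>n<Suc N. first_hit lam x n y) = (\<Sum>n<N. first_hit lam x (Suc n) y)"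
    by (subst sum.lessThan_Suc_shift) simp
  also have "\<dots> = (\<Sum>n<N. \<Sum>\<eta>\<in>jumps lam y. jprob lam y \<eta> *
        (if target y \<eta> = x then (if n = 0 then 1 else 0) else first_hit lam x n (target y \<eta>)))"
    by simp
  also have "\<dots> = (\<Sum>\<eta>\<in>jumps lam y. jprob lam y \<eta> * (\<Sum>n<N.
        (if target y \<eta> = x then (if n = 0 then 1 else 0) else first_hit lam x n (target y \<eta>))))"
    by (simp add: sum_distrib_left sum.swap[of _ "{..<N}"])
  also have "\<dots> \<le> (\<Sum>\<eta>\<in>jumps lam y. jprob lam y \<eta> *
     (if target y \<eta> = x then 1 else (\<Sum>n<N. first_hit lam x n (target y \<eta>))))"
  proof (intro sum_mono mult_left_mono pnn)
    fix \<eta>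
    show "(\<Sum>n<N. (if target y \<eta> = x then (if n = 0 then 1 else 0) else first_hit lam x n (target y \<eta>)))
       \<le> (if target y \<eta> = x then 1 else (\<Sum>n<N. first_hit lam x n (target y \<eta>)))"
    proof (cases "target y \<eta> = x")
      case True
      have "(\<Sum>n<N. (if n = 0 then 1 else 0::real)) \<le> 1"
        by (cases N) (simp_all add: sum.lessThan_Suc_shift)
      thus ?thesis using True by simp
    qed simp
  qed
  finally show ?thesis .
qed

theorem mainTheorem9:
  fixes S :: "nat set" and lam :: "int \<Rightarrow> nat \<Rightarrow> real" and \<Gamma> :: "int set"
  assumes S_inf: "infinite S"
    and irred: "irreducible_chain S lam"
    and \<Gamma>_fin: "finite \<Gamma>"
    and outside: "\<And>\<eta> x. \<eta> \<notin> \<Gamma> \<Longrightarrow> lam \<eta> x = 0"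
    and nonneg: "\<And>\<eta> x. 0 \<le> lam \<eta> x"
    and stay_in: "\<And>\<eta> x. x \<in> S \<Longrightarrow> int x + \<eta> \<notin> int ` S \<Longrightarrow> lam \<eta> x = 0"
    and liminf: "Liminf (inf at_top (principal S)) (\<lambda>x. ereal (H1 \<Gamma> lam x)) > 1"
  shows "transient_chain S lam"
proof -
  have jsub: "\<And>y. jumps lam y \<subseteq> \<Gamma>" using outside unfolding jumps_def by blast
  have jfin: "\<And>y. finite (jumps lam y)" using finite_subset[OF jsub \<Gamma>_fin] .
  have jpos: "\<And>y \<eta>. \<eta> \<in> jumps lam y \<Longrightarrow> 0 < lam \<eta> y"
    using nonneg unfolding jumps_def by (metis (mono_tags) less_eq_real_def mem_Collect_eq)
  have jt: "target y \<eta> \<in> S \<and> int (target y \<eta>) = int y + \<eta>"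
    if yS: "y \<in> S" and ej: "\<eta> \<in> jumps lam y" for y \<eta>
  proof -
    have "int y + \<eta> \<in> int ` S" using stay_in[OF yS, of \<eta>] jpos[OF ej] by force
    then obtain z where "z \<in> S" "int y + \<eta> = int z" by blast
    thus ?thesis unfolding target_def by simp
  qed
  have qnn: "\<And>y. 0 \<le> qtot lam y" unfolding qtot_def by (intro sum_nonneg nonneg)
  have qpos: "0 < qtot lam y" if yS: "y \<in> S" for y
  proof -
    have "infinite (S - {y})" using S_inf by simp
    then obtain z where z: "z \<in> S" "z \<noteq> y" using infinite_imp_nonempty by blast
    have "(jump_rel S lam)\<^sup>*\<^sup>* y z" using irred yS z unfolding irreducible_chain_def by blast
    then obtain w where "jump_rel S lam y w" using z(2) by (cases rule: converse_rtranclpE) auto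
    then obtain \<eta> where "\<eta> \<noteq> 0" "lam \<eta> y > 0" unfolding jump_rel_def by blast
    hence ej: "\<eta> \<in> jumps lam y" unfolding jumps_def by auto
    have "lam \<eta> y \<le> qtot lam y" unfolding qtot_def
      using ej jfin nonneg by (intro member_le_sum) auto
    thus ?thesis using \<open>lam \<eta> y > 0\<close> by simp
  qed
  have pnn: "\<And>y \<eta>. 0 \<le> jprob lam y \<eta>" unfolding jprob_def using nonneg qnn by simp
  have psum: "(\<Sum>\<eta>\<in>jumps lam y. jprob lam y \<eta>) = 1" if yS: "y \<in> S" for y
    unfolding jprob_def sum_divide_distrib[symmetric] qtot_def[symmetric] using qpos[OF yS] by simp
  obtain c where c1: "ereal 1 < ereal c" and c2: "ereal c < Liminf (inf at_top (principal S)) (\<lambda>x. ereal (H1 \<Gamma> lam x))"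
    using ereal_dense2[of "ereal 1"] liminf by (metis ereal_dense2 less_trans one_ereal_def)
  have c: "1 < c" using c1 by simp
  have "eventually (\<lambda>y. ereal c < ereal (H1 \<Gamma> lam y)) (inf at_top (principal S))"
    using less_LiminfD[OF c2] by simp
  then obtain N0 where N0: "\<And>y. y \<ge> N0 \<Longrightarrow> y \<in> S \<Longrightarrow> c < H1 \<Gamma> lam y"
    by (auto simp: eventually_inf_principal eventually_at_top_linorder)
  obtain Y where Y: "\<And>y::nat. real y \<ge> Y \<Longrightarrow> H1 \<Gamma> lam y > c \<Longrightarrow>
           (\<Sum>\<eta>\<in>\<Gamma>. lam \<eta> y * (ff (real y + of_int \<eta>) - ff (real y))) \<le> 0"
    using key_analytic[of \<Gamma> lam c, OF \<Gamma>_fin nonneg c] by blast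
  define K where "K = nat (\<Sum>\<eta>\<in>\<Gamma>. \<bar>\<eta>\<bar>)"
  have K: "\<bar>\<eta>\<bar> \<le> int K" if "\<eta> \<in> \<Gamma>" for \<eta>
  proof -
    have "\<bar>\<eta>\<bar> \<le> (\<Sum>\<eta>\<in>\<Gamma>. \<bar>\<eta>\<bar>)" using that \<Gamma>_fin by (intro member_le_sum) auto
    thus ?thesis unfolding K_def by simp
  qed
  show ?thesis unfolding transient_chain_def
  proof
    fix x assume xS: "x \<in> S"
    define x0 where "x0 = max (max N0 x) (nat \<lceil>Y\<rceil> + K + 16)"
    define F where "F = (\<lambda>z::nat. if z \<le> x0 then 1 else ff (real z) / ff (real x0))"
    have x0ge: "N0 \<le> x0" "x \<le> x0" "Y \<le> real x0" "real K + 16 \<le> real x0"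
      unfolding x0_def by (auto simp: max_def) linarith+
    have ffx0: "0 < ff (real x0)" using ff_pos x0ge(4) by simp
    have F01: "0 \<le> F z \<and> F z \<le> 1" for z
    proof (cases "z \<le> x0")
      case False
      hence "ff (real z) \<le> ff (real x0)" "0 < ff (real z)"
        using ff_mono[of "real x0" "real z"] ff_pos[of "real z"] x0ge(4) by auto
      thus ?thesis using ffx0 False unfolding F_def by auto
    qed (simp add: F_def)
    have Flt: "F z < 1" if "x0 < z" for z
    proof -
      have "ff (real z) < ff (real x0)" using ff_strict[of "real x0" "real z"] x0ge(4) that by simp
      thus ?thesis using ffx0 that unfolding F_def by simp
    qed
    have Fx: "F x = 1" using x0ge(2) unfolding F_def by simp
    have super: "(\<Sum>\<eta>\<in>jumps lam y. jprob lam y \<eta> * F (target y \<eta>)) \<le> F y"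
      if yS: "y \<in> S" and yx0: "x0 < y" for y
    proof -
      have Hy: "c < H1 \<Gamma> lam y" using N0 x0ge(1) yx0 yS by simp
      have A: "(\<Sum>\<eta>\<in>\<Gamma>. lam \<eta> y * (ff (real y + of_int \<eta>) - ff (real y))) \<le> 0"
        using Y[OF _ Hy] x0ge(3) yx0 by simp
      have ty: "F (target y \<eta>) \<le> ff (real y + of_int \<eta>) / ff (real x0)"
        if ej: "\<eta> \<in> jumps lam y" for \<eta>
      proof -
        have eq: "real (target y \<eta>) = real y + of_int \<eta>"
        proof -
          have "int (target y \<eta>) = int y + \<eta>" using jt[OF yS ej] by simp
          hence "real_of_int (int (target y \<eta>)) = real_of_int (int y + \<eta>)" by simp
          thus ?thesis by simp
        qed
        have "\<bar>\<eta>\<bar> \<le> int K" using K jsub ej by blast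
        hence "real y + of_int \<eta> \<ge> real y - real K" by linarith
        hence t16: "16 \<le> real (target y \<eta>)" using eq x0ge(4) yx0 by linarith
        show ?thesis
        proof (cases "target y \<eta> \<le> x0")
          case True
          have "ff (real x0) \<le> ff (real (target y \<eta>))" using ff_mono[OF t16] True by simp
          thus ?thesis using True ffx0 eq unfolding F_def by simp
        next
          case False thus ?thesis unfolding F_def eq by simp
        qed
      qed
      have "(\<Sum>\<eta>\<in>jumps lam y. jprob lam y \<eta> * F (target y \<eta>))
          \<le> (\<Sum>\<eta>\<in>jumps lam y. jprob lam y \<eta> * (ff (real y + of_int \<eta>) / ff (real x0)))"
        using ty pnn by (intro sum_mono mult_left_mono) auto
      also have "\<dots> = (\<Sum>\<eta>\<in>jumps lam y. lam \<eta> y * ff (real y + of_int \<eta>)) / (qtot lam y * ff (real x0))"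
        unfolding jprob_def by (simp add: sum_divide_distrib)
      also have "(\<Sum>\<eta>\<in>jumps lam y. lam \<eta> y * ff (real y + of_int \<eta>))
          = (\<Sum>\<eta>\<in>jumps lam y. lam \<eta> y * (ff (real y + of_int \<eta>) - ff (real y))) + qtot lam y * ff (real y)"
        unfolding qtot_def by (simp add: algebra_simps sum.distrib sum_distrib_left sum_subtractf)
      also have "(\<Sum>\<eta>\<in>jumps lam y. lam \<eta> y * (ff (real y + of_int \<eta>) - ff (real y)))
          = (\<Sum>\<eta>\<in>\<Gamma>. lam \<eta> y * (ff (real y + of_int \<eta>) - ff (real y)))"
        by (rule sum.mono_neutral_left[OF \<Gamma>_fin jsub]) (auto simp: jumps_def)
      finally have "(\<Sum>\<eta>\<in>jumps lam y. jprob lam y \<eta> * F (target y \<eta>))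
          \<le> (0 + qtot lam y * ff (real y)) / (qtot lam y * ff (real x0))"
        using A qpos[OF yS] ffx0 by (smt (verit) divide_right_mono mult_pos_pos)
      also have "\<dots> = F y" using qpos[OF yS] yx0 unfolding F_def by simp
      finally show ?thesis .
    qed
    define h where "h = (\<lambda>N y. \<Sum>n<N. first_hit lam x n y)"
    have hstep: "h (Suc N) y \<le> (\<Sum>\<eta>\<in>jumps lam y. jprob lam y \<eta> *
        (if target y \<eta> = x then 1 else h N (target y \<eta>)))" for N y
      unfolding h_def by (rule hit_step[OF pnn])
    have hF: "h N y \<le> F y" if "y \<in> S" for N y
      using that
    proof (induction N arbitrary: y)
      case 0 thus ?case using F01 by (simp add: h_def)
    next
      case (Suc N)
      have "h (Suc N) y \<le> (\<Sum>\<eta>\<in>jumps lam y. jprob lam y \<eta> *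
        (if target y \<eta> = x then 1 else h N (target y \<eta>)))" by (rule hstep)
      also have "\<dots> \<le> (\<Sum>\<eta>\<in>jumps lam y. jprob lam y \<eta> * F (target y \<eta>))"
      proof (intro sum_mono mult_left_mono pnn)
        fix \<eta> assume "\<eta> \<in> jumps lam y"
        hence "target y \<eta> \<in> S" using jt Suc.prems by blast
        thus "(if target y \<eta> = x then 1 else h N (target y \<eta>)) \<le> F (target y \<eta>)"
          using Suc.IH Fx by auto
      qed
      also have "\<dots> \<le> F y"
      proof (cases "y \<le> x0")
        case True
        have "(\<Sum>\<eta>\<in>jumps lam y. jprob lam y \<eta> * F (target y \<eta>)) \<le> (\<Sum>\<eta>\<in>jumps lam y. jprob lam y \<eta> * 1)"
          using F01 pnn by (intro sum_mono mult_left_mono) auto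
        also have "\<dots> = 1" using psum[OF Suc.prems] by simp
        finally show ?thesis using True unfolding F_def by simp
      next
        case False thus ?thesis using super Suc.prems by simp
      qed
      finally show ?case .
    qed
    have hle1: "h N y \<le> 1" if "y \<in> S" for N y using hF[OF that, of N] F01[of y] by simp
    define good where "good = (\<lambda>a. \<exists>\<delta>>0. \<forall>N. h N a \<le> 1 - \<delta>)"
    have goodT: "good y" if "y \<in> S" "x0 < y" for y
      unfolding good_def using hF[OF that(1)] Flt[OF that(2)]
      by (intro exI[of _ "1 - F y"]) auto
    have gstep: "good a" if R: "jump_rel S lam a b" and bx: "b \<noteq> x" and gb: "good b" for a b
    proof -
      from R obtain \<eta> where aS: "a \<in> S" and bS: "b \<in> S" and \<eta>: "\<eta> \<noteq> 0" "lam \<eta> a > 0" "int b = int a + \<eta>"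
        unfolding jump_rel_def by blast
      have ej: "\<eta> \<in> jumps lam a" using \<eta> unfolding jumps_def by auto
      have tb: "target a \<eta> = b" using \<eta>(3) unfolding target_def by simp
      define p where "p = jprob lam a \<eta>"
      have ppos: "0 < p" unfolding p_def jprob_def using \<eta>(2) qpos[OF aS] by simp
      obtain \<delta> where \<delta>: "\<delta> > 0" "\<And>N. h N b \<le> 1 - \<delta>" using gb unfolding good_def by blast
      define \<delta>' where "\<delta>' = min (p * \<delta>) 1"
      have \<delta>'pos: "\<delta>' > 0" unfolding \<delta>'_def using ppos \<delta>(1) by simp
      have rest: "(\<Sum>e\<in>jumps lam a - {\<eta>}. jprob lam a e) = 1 - p"
        using psum[OF aS] sum.remove[OF jfin ej, of "jprob lam a"] unfolding p_def by simp
      have "h N a \<le> 1 - \<delta>'" for N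
      proof (cases N)
        case 0 thus ?thesis unfolding h_def \<delta>'_def by simp
      next
        case (Suc M)
        let ?g = "\<lambda>e. jprob lam a e * (if target a e = x then 1 else h M (target a e))"
        have "h N a \<le> sum ?g (jumps lam a)" unfolding Suc by (rule hstep)
        also have "\<dots> = ?g \<eta> + sum ?g (jumps lam a - {\<eta>})" by (rule sum.remove[OF jfin ej])
        also have "\<dots> \<le> p * (1 - \<delta>) + (\<Sum>e\<in>jumps lam a - {\<eta>}. jprob lam a e * 1)"
        proof (intro add_mono sum_mono mult_left_mono pnn)
          show "?g \<eta> \<le> p * (1 - \<delta>)" using tb bx \<delta>(2) ppos unfolding p_def by simp
        next
          fix e assume "e \<in> jumps lam a - {\<eta>}"
          hence "target a e \<in> S" using jt aS by blast
          thus "(if target a e = x then 1 else h M (target a e)) \<le> 1" using hle1 by simp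
        qed
        also have "\<dots> = 1 - p * \<delta>" using rest by (simp add: algebra_simps)
        also have "\<dots> \<le> 1 - \<delta>'" unfolding \<delta>'_def by simp
        finally show ?thesis .
      qed
      thus ?thesis unfolding good_def using \<delta>'pos by blast
    qed
    let ?R = "jump_rel S lam"
    define T where "T = {y \<in> S. x0 < y}"
    obtain y0 where y0: "y0 \<in> S" "x0 < y0"
      using S_inf by (metis infinite_nat_iff_unbounded)
    have "?R\<^sup>*\<^sup>* x y0" using irred xS y0 unfolding irreducible_chain_def by blast
    then obtain n0 where "(?R ^^ n0) x y0" by (auto simp: rtranclp_power)
    hence exk: "\<exists>k. \<exists>y\<in>T. (?R ^^ k) x y" using y0 unfolding T_def by blast
    define k where "k = (LEAST k. \<exists>y\<in>T. (?R ^^ k) x y)"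
    have kex: "\<exists>y\<in>T. (?R ^^ k) x y" unfolding k_def by (rule LeastI_ex[OF exk])
    have kmin: "\<not> (\<exists>y\<in>T. (?R ^^ j) x y)" if "j < k" for j
      using not_less_Least[OF that[unfolded k_def]] unfolding k_def .
    have claim: "\<forall>a y. j < k \<longrightarrow> (?R ^^ j) a y \<longrightarrow> y \<in> T \<longrightarrow> good a" for j
    proof (induction j)
      case 0 show ?case using goodT unfolding T_def by auto
    next
      case (Suc j)
      show ?case
      proof (intro allI impI)
        fix a y assume jk: "Suc j < k" and p: "(?R ^^ Suc j) a y" and yT: "y \<in> T"
        obtain b where ab: "?R a b" and "(?R ^^ j) b y" using relpowp_Suc_D2[OF p] by blast
        hence gb: "good b" using Suc.IH jk yT by simp
        have "b \<noteq> x" using kmin[of j] jk yT \<open>(?R ^^ j) b y\<close> by auto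
        thus "good a" using gstep[OF ab _ gb] by simp
      qed
    qed
    have "x \<notin> T" using x0ge(2) unfolding T_def by simp
    then obtain y where yT: "y \<in> T" and px: "(?R ^^ k) x y" and "k \<noteq> 0"
      using kex by (cases k) auto
    then obtain j where kj: "k = Suc j" by (cases k) auto
    obtain b where ab: "?R x b" and pb: "(?R ^^ j) b y" using relpowp_Suc_D2 px kj by metis
    have gb: "good b" using claim[of j] kj pb yT by simp
    have "b \<noteq> x" using kmin[of j] kj yT pb by auto
    hence "good x" using gstep[OF ab _ gb] by simp
    thus "\<exists>\<epsilon>>0. \<forall>N. (\<Sum>n<N. first_hit lam x n x) \<le> 1 - \<epsilon>"
      unfolding good_def h_def .
  qed
qed

end
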